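(* For any tree $T$ and $c>0$, there exists $C>1$ such that the following holds. Given a $(c,t)$-sparse graph $\Gamma$ on $n$ vertices, for some $t$, every subgraph $G\subseteq\Gamma$ with at least $Ctn$ edges contains a copy of $T$ which is an induced subgraph of $\Gamma$.
   Context: A graph $\Gamma$ is $(c,t)$-sparse if for every pair of (not necessarily disjoint) vertex subsets $A,B\subseteq V(\Gamma)$ with $|A|,|B|\ge t$ we have $e(A,B)\le (1-c)|A||B|$, where $e(A,B)$ is the number of ordered pairs $(a,b)\in A\times B$ such that $\{a,b\}$ is an edge of $\Gamma$. *)

theory Defs
  imports Complex_Main
begin

definition simple_graph :: "'a set \<Rightarrow> ('a \<Rightarrow> 'a \<Rightarrow> bool) \<Rightarrow> bool" where
  "simple_graph V E \<longleftrightarrow> finite V \<and>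
     (\<forall>u v. E u v \<longrightarrow> u \<in> V \<and> v \<in> V \<and> u \<noteq> v \<and> E v u)"

definition num_edges :: "'a set \<Rightarrow> ('a \<Rightarrow> 'a \<Rightarrow> bool) \<Rightarrow> nat" where
  "num_edges V E = card {{u, v} | u v. u \<in> V \<and> v \<in> V \<and> E u v}"

definition e_pairs :: "('a \<Rightarrow> 'a \<Rightarrow> bool) \<Rightarrow> 'a set \<Rightarrow> 'a set \<Rightarrow> nat" where
  "e_pairs E A B = card {(a, b). a \<in> A \<and> b \<in> B \<and> E a b}"

definition sparse :: "real \<Rightarrow> real \<Rightarrow> 'a set \<Rightarrow> ('a \<Rightarrow> 'a \<Rightarrow> bool) \<Rightarrow> bool" where
  "sparse c t V E \<longleftrightarrow> (\<forall>A B. A \<subseteq> V \<longrightarrow> B \<subseteq> V \<longrightarrow> real (card A) \<ge> t \<longrightarrow> real (card B) \<ge> t \<longrightarrow>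
      real (e_pairs E A B) \<le> (1 - c) * real (card A) * real (card B))"

definition connected_graph :: "'a set \<Rightarrow> ('a \<Rightarrow> 'a \<Rightarrow> bool) \<Rightarrow> bool" where
  "connected_graph V E \<longleftrightarrow> (\<forall>u\<in>V. \<forall>v\<in>V. (\<lambda>x y. x \<in> V \<and> y \<in> V \<and> E x y)\<^sup>*\<^sup>* u v)"

definition is_cycle :: "'a set \<Rightarrow> ('a \<Rightarrow> 'a \<Rightarrow> bool) \<Rightarrow> 'a list \<Rightarrow> bool" where
  "is_cycle V E xs \<longleftrightarrow> length xs \<ge> 3 \<and> distinct xs \<and> set xs \<subseteq> V \<and>
     (\<forall>i. Suc i < length xs \<longrightarrow> E (xs ! i) (xs ! Suc i)) \<and> E (last xs) (hd xs)"

definition acyclic_graph :: "'a set \<Rightarrow> ('a \<Rightarrow> 'a \<Rightarrow> bool) \<Rightarrow> bool" where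
  "acyclic_graph V E \<longleftrightarrow> (\<nexists>xs. is_cycle V E xs)"

definition is_tree :: "'a set \<Rightarrow> ('a \<Rightarrow> 'a \<Rightarrow> bool) \<Rightarrow> bool" where
  "is_tree V E \<longleftrightarrow> simple_graph V E \<and> V \<noteq> {} \<and> connected_graph V E \<and> acyclic_graph V E"

text \<open>f embeds the graph (VT,ET) as a subgraph of G = (V,EG), and the image is induced in
  \<Gamma> = (V,E): for x,y in VT, f x f y is an edge of \<Gamma> only if xy is an edge of T.\<close>
definition induced_copy ::
  "'b set \<Rightarrow> ('b \<Rightarrow> 'b \<Rightarrow> bool) \<Rightarrow> 'a set \<Rightarrow> ('a \<Rightarrow> 'a \<Rightarrow> bool) \<Rightarrow> ('a \<Rightarrow> 'a \<Rightarrow> bool) \<Rightarrow> ('b \<Rightarrow> 'a) \<Rightarrow> bool" where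
  "induced_copy VT ET V EG E f \<longleftrightarrow> inj_on f VT \<and> f ` VT \<subseteq> V \<and>
     (\<forall>x\<in>VT. \<forall>y\<in>VT. ET x y \<longrightarrow> EG (f x) (f y)) \<and>
     (\<forall>x\<in>VT. \<forall>y\<in>VT. E (f x) (f y) \<longrightarrow> ET x y)"

end

theory Submission
  imports Defs
begin

lemma card_swap_sum:
  assumes "finite A" "finite B"
  shows "(\<Sum>a\<in>A. card {b\<in>B. R a b}) = (\<Sum>b\<in>B. card {a\<in>A. R a b})"
proof -
  have "(\<Sum>a\<in>A. card {b\<in>B. R a b}) = card (SIGMA a:A. {b\<in>B. R a b})"
    using assms by (simp add: card_SigmaI)
  also have "(SIGMA a:A. {b\<in>B. R a b}) = prod.swap ` (SIGMA b:B. {a\<in>A. R a b})"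
    by force
  also have "card \<dots> = card (SIGMA b:B. {a\<in>A. R a b})"
    by (rule card_image) (simp add: inj_on_def)
  also have "\<dots> = (\<Sum>b\<in>B. card {a\<in>A. R a b})"
    using assms by (simp add: card_SigmaI)
  finally show ?thesis .
qed

lemma e_pairs_sum:
  assumes "finite A" "finite S"
  shows "e_pairs E A S = (\<Sum>a\<in>A. card {y\<in>S. E a y})"
proof -
  have "{(a, b). a \<in> A \<and> b \<in> S \<and> E a b} = (SIGMA a:A. {y\<in>S. E a y})" by auto
  then show ?thesis unfolding e_pairs_def using assms by (simp add: card_SigmaI)
qed

definition nbh :: "'a set \<Rightarrow> ('a \<Rightarrow> 'a \<Rightarrow> bool) \<Rightarrow> 'a \<Rightarrow> 'a set" where
  "nbh W EG p = {y \<in> W. EG p y}"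

definition avoid :: "('a \<Rightarrow> 'a \<Rightarrow> bool) \<Rightarrow> 'a set \<Rightarrow> 'a set" where
  "avoid E U = (\<Union>u\<in>U. insert u {y. E u y})"

fun good :: "('a \<Rightarrow> 'a \<Rightarrow> bool) \<Rightarrow> ('a \<Rightarrow> 'a \<Rightarrow> bool) \<Rightarrow> 'a set \<Rightarrow> nat \<Rightarrow> real \<Rightarrow> 'a set \<Rightarrow> 'a \<Rightarrow> bool" where
  "good E EG W 0 \<delta> U p =
     (real (card (nbh W EG p - avoid E (U - {p}))) \<ge> \<delta> * real (card (nbh W EG p)))"
| "good E EG W (Suc h) \<delta> U p =
     (real (card {v \<in> nbh W EG p - avoid E (U - {p}). good E EG W h \<delta> (insert v U) v})
        \<ge> \<delta> * real (card (nbh W EG p)))"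

fun Mf :: "real \<Rightarrow> nat \<Rightarrow> real" where
  "Mf c 0 = 1"
| "Mf c (Suc h) = 1 + 4 / c * Mf c h"

lemma avoid_insert: "avoid E (insert u U) = insert u {y. E u y} \<union> avoid E U"
  by (auto simp: avoid_def)

lemma avoid_mono: "U \<subseteq> U' \<Longrightarrow> avoid E U \<subseteq> avoid E U'"
  by (auto simp: avoid_def)

lemma avoid_ins_diff: "avoid E (insert u U - {p}) \<subseteq> insert u {y. E u y} \<union> avoid E (U - {p})"
  by (auto simp: avoid_def)

lemma good_mono_delta:
  "finite W \<Longrightarrow> \<delta>' \<le> \<delta> \<Longrightarrow> good E EG W h \<delta> U p \<Longrightarrow> good E EG W h \<delta>' U p"
proof (induction h arbitrary: U p)
  case 0
  then show ?case
    by (simp add: order_trans[OF mult_right_mono[OF 0(2)]])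
next
  case (Suc h)
  let ?S = "nbh W EG p - avoid E (U - {p})"
  have fin: "finite {v \<in> ?S. good E EG W h \<delta>' (insert v U) v}"
    using Suc(2) by (auto simp: nbh_def)
  have "{v \<in> ?S. good E EG W h \<delta> (insert v U) v} \<subseteq> {v \<in> ?S. good E EG W h \<delta>' (insert v U) v}"
    using Suc.IH[OF Suc.prems(1,2)] by blast
  from card_mono[OF fin this] Suc(3,4) show ?case
    by (simp add: order_trans[OF mult_right_mono[OF Suc(3)]])
qed

lemma good_mono_h1:
  "finite W \<Longrightarrow> good E EG W (Suc h) \<delta> U p \<Longrightarrow> good E EG W h \<delta> U p"
proof (induction h arbitrary: U p)
  case 0
  let ?S = "nbh W EG p - avoid E (U - {p})"
  have fin: "finite ?S" using 0(1) by (auto simp: nbh_def)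
  have "{v \<in> ?S. good E EG W 0 \<delta> (insert v U) v} \<subseteq> ?S" by auto
  from card_mono[OF fin this] 0(2) show ?case by simp
next
  case (Suc h)
  let ?S = "nbh W EG p - avoid E (U - {p})"
  have fin: "finite {v \<in> ?S. good E EG W h \<delta> (insert v U) v}"
    using Suc(2) by (auto simp: nbh_def)
  have "{v \<in> ?S. good E EG W (Suc h) \<delta> (insert v U) v} \<subseteq> {v \<in> ?S. good E EG W h \<delta> (insert v U) v}"
    using Suc.IH[OF Suc.prems(1)] by blast
  from card_mono[OF fin this] Suc(3) show ?case
    by simp
qed

lemma good_mono_h:
  "finite W \<Longrightarrow> h' \<le> h \<Longrightarrow> good E EG W h \<delta> U p \<Longrightarrow> good E EG W h' \<delta> U p"
proof (induction h)
  case 0 then show ?case by simp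
next
  case (Suc h)
  then show ?case
    by (metis good_mono_h1 le_Suc_eq)
qed


locale ctx =
  fixes V :: "'a set" and E EG :: "'a \<Rightarrow> 'a \<Rightarrow> bool" and W :: "'a set" and c t D :: real
  assumes finV: "finite V"
    and Eok: "\<And>u v. E u v \<Longrightarrow> u \<in> V \<and> v \<in> V \<and> E v u"
    and sp: "sparse c t V E"
    and c0: "0 < c" and c1: "c \<le> 1/2"
    and WV: "W \<subseteq> V"
    and EGE: "\<And>u v. EG u v \<Longrightarrow> E u v"
    and EGsym: "\<And>u v. EG u v \<Longrightarrow> EG v u"
    and degW: "\<And>w. w \<in> W \<Longrightarrow> D \<le> real (card (nbh W EG w))"
    and t0: "0 < t"
    and Eirr: "\<And>u. \<not> E u u"
begin

lemma finW: "finite W" using finV WV finite_subset by blast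

lemma fin_nbh: "finite (nbh W EG p)" using finW by (simp add: nbh_def)

definition badset :: "'a set \<Rightarrow> 'a set" where
  "badset S = {u \<in> V. real (card {y \<in> S. E u y}) > (1 - c) * real (card S)}"

lemma bad_small:
  assumes "S \<subseteq> V" "t \<le> real (card S)"
  shows "real (card (badset S)) < t"
proof (rule ccontr)
  let ?A = "badset S"
  assume "\<not> ?thesis"
  hence At: "t \<le> real (card ?A)" by simp
  have finA: "finite ?A" using finV by (simp add: badset_def)
  have finS: "finite S" using assms(1) finV finite_subset by blast
  have Ane: "?A \<noteq> {}" using At t0 by auto
  have "?A \<subseteq> V" by (auto simp: badset_def)
  with sp assms At have le: "real (e_pairs E ?A S) \<le> (1 - c) * real (card ?A) * real (card S)"
    unfolding sparse_def by blast
  have "real (e_pairs E ?A S) = (\<Sum>a\<in>?A. real (card {y\<in>S. E a y}))"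
    using e_pairs_sum[OF finA finS] by simp
  also have "\<dots> > (\<Sum>a\<in>?A. (1 - c) * real (card S))"
    by (rule sum_strict_mono[OF finA Ane]) (auto simp: badset_def)
  also have "(\<Sum>a\<in>?A. (1 - c) * real (card S)) = (1 - c) * real (card ?A) * real (card S)"
    by simp
  finally show False using le by simp
qed

lemma remove_bound:
  assumes "S \<subseteq> V" "u \<notin> badset S"
  shows "real (card (S - insert u {y. E u y})) \<ge> c * real (card S) - 1"
proof -
  have finS: "finite S" using assms(1) finV finite_subset by blast
  have b: "real (card {y \<in> S. E u y}) \<le> (1 - c) * real (card S)"
  proof (cases "u \<in> V")
    case True then show ?thesis using assms(2) by (auto simp: badset_def)
  next
    case False
    then have "{y \<in> S. E u y} = {}" using Eok by blast
    then have "real (card {y \<in> S. E u y}) = 0" by (metis card.empty of_nat_0)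
    moreover have "0 \<le> (1 - c) * real (card S)" using c1 by simp
    ultimately show ?thesis by linarith
  qed
  have e1: "S - {y. E u y} = S - {y \<in> S. E u y}" by auto
  have "card (S - {y \<in> S. E u y}) = card S - card {y \<in> S. E u y}"
    by (rule card_Diff_subset) (use finS in auto)
  moreover have "card {y \<in> S. E u y} \<le> card S" by (rule card_mono[OF finS]) auto
  ultimately have r1: "real (card (S - {y. E u y})) = real (card S) - real (card {y \<in> S. E u y})"
    using e1 by (simp add: of_nat_diff)
  have e2: "S - insert u {y. E u y} = (S - {y. E u y}) - {u}" by auto
  have "real (card ((S - {y. E u y}) - {u})) \<ge> real (card (S - {y. E u y})) - 1"
  proof (cases "u \<in> S - {y. E u y}")
    case True
    have "card (S - {y. E u y}) > 0" using True finS card_gt_0_iff by blast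
    then show ?thesis using True finS by (simp add: card_Diff_singleton of_nat_diff)
  next
    case False then show ?thesis by simp
  qed
  then have "real (card (S - insert u {y. E u y})) \<ge> real (card (S - {y. E u y})) - 1"
    using e2 by simp
  then show ?thesis using r1 b by (simp add: left_diff_distrib)
qed

lemma nbh_sub: "nbh W EG p \<subseteq> V" using WV by (auto simp: nbh_def)

lemma real_card_diff:
  assumes "finite A" "finite B"
  shows "real (card A) - real (card B) \<le> real (card (A - B))"
proof -
  have "A = (A - B) \<union> (A \<inter> B)" by auto
  then have "card A \<le> card (A - B) + card (A \<inter> B)" by (metis card_Un_le)
  moreover have "card (A \<inter> B) \<le> card B" using assms by (simp add: card_mono)
  ultimately show ?thesis by linarith
qed

lemma robust:
  "p \<in> W \<Longrightarrow> t \<le> \<delta> * D \<Longrightarrow> 4 / c \<le> \<delta> * D \<Longrightarrow> 0 \<le> \<delta> \<Longrightarrow> good E EG W h \<delta> U p \<Longrightarrow>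
   real (card {u \<in> V. \<not> good E EG W h (c / 2 * \<delta>) (insert u U) p}) \<le> Mf c h * t"
proof (induction h arbitrary: U p)
  case 0
  let ?N = "nbh W EG p"
  let ?S = "?N - avoid E (U - {p})"
  have SV: "?S \<subseteq> V" using nbh_sub by blast
  have finS: "finite ?S" using fin_nbh by blast
  have Sge: "\<delta> * real (card ?N) \<le> real (card ?S)" using 0(5) by simp
  have "\<delta> * D \<le> \<delta> * real (card ?N)" using degW[OF 0(1)] 0(4) by (simp add: mult_left_mono)
  hence St: "t \<le> real (card ?S)" and Sc: "4 / c \<le> real (card ?S)" using Sge 0(2,3) by linarith+
  have sub: "{u \<in> V. \<not> good E EG W 0 (c / 2 * \<delta>) (insert u U) p} \<subseteq> badset ?S"
  proof
    fix u assume u: "u \<in> {u \<in> V. \<not> good E EG W 0 (c / 2 * \<delta>) (insert u U) p}"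
    show "u \<in> badset ?S"
    proof (rule ccontr)
      assume nb: "u \<notin> badset ?S"
      have r: "real (card (?S - insert u {y. E u y})) \<ge> c * real (card ?S) - 1"
        by (rule remove_bound[OF SV nb])
      have "?S - insert u {y. E u y} \<subseteq> ?N - avoid E (insert u U - {p})"
        using avoid_ins_diff[of E u U p] by blast
      hence "card (?S - insert u {y. E u y}) \<le> card (?N - avoid E (insert u U - {p}))"
        using fin_nbh by (simp add: card_mono)
      moreover have "c * real (card ?S) \<ge> 4" using Sc c0 by (simp add: field_simps)
      moreover have "c / 2 * \<delta> * real (card ?N) \<le> c / 2 * real (card ?S)"
        using Sge c0 by simp
      ultimately have "c / 2 * \<delta> * real (card ?N) \<le> real (card (?N - avoid E (insert u U - {p})))"
        using r by linarith
      then show False using u by simp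
    qed
  qed
  have "real (card {u \<in> V. \<not> good E EG W 0 (c / 2 * \<delta>) (insert u U) p}) \<le> real (card (badset ?S))"
    using sub finV by (simp add: card_mono badset_def)
  also have "\<dots> < t" by (rule bad_small[OF SV St])
  finally show ?case by simp
next
  case (Suc h)
  let ?N = "nbh W EG p"
  let ?S = "?N - avoid E (U - {p})"
  define Cand where "Cand = {v \<in> ?S. good E EG W h \<delta> (insert v U) v}"
  define Destr where "Destr u = {v \<in> Cand. \<not> good E EG W h (c / 2 * \<delta>) (insert u (insert v U)) v}" for u
  define Heavy where "Heavy = {u \<in> V. real (card (Destr u)) > c / 4 * real (card Cand)}"
  have CV: "Cand \<subseteq> V" using nbh_sub by (auto simp: Cand_def)
  have CW: "Cand \<subseteq> W" by (auto simp: Cand_def nbh_def)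
  have finC: "finite Cand" using fin_nbh by (auto simp: Cand_def)
  have Cge: "\<delta> * real (card ?N) \<le> real (card Cand)" using Suc(6) by (simp add: Cand_def)
  have "\<delta> * D \<le> \<delta> * real (card ?N)" using degW[OF Suc(2)] Suc(5) by (simp add: mult_left_mono)
  hence Ct: "t \<le> real (card Cand)" and Cc: "4 / c \<le> real (card Cand)" using Cge Suc(3,4) by linarith+
  have cC4: "c * real (card Cand) \<ge> 4" using Cc c0 by (simp add: field_simps)
  have finD: "finite (Destr u)" for u using finC by (simp add: Destr_def)
  have sub: "{u \<in> V. \<not> good E EG W (Suc h) (c / 2 * \<delta>) (insert u U) p} \<subseteq> badset Cand \<union> Heavy"
  proof
    fix u assume u: "u \<in> {u \<in> V. \<not> good E EG W (Suc h) (c / 2 * \<delta>) (insert u U) p}"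
    show "u \<in> badset Cand \<union> Heavy"
    proof (rule ccontr)
      assume nb: "u \<notin> badset Cand \<union> Heavy"
      have r: "real (card (Cand - insert u {y. E u y})) \<ge> c * real (card Cand) - 1"
        by (rule remove_bound[OF CV]) (use nb in blast)
      have hv: "real (card (Destr u)) \<le> c / 4 * real (card Cand)"
        using nb u by (auto simp: Heavy_def)
      let ?C' = "{v \<in> ?N - avoid E (insert u U - {p}). good E EG W h (c / 2 * \<delta>) (insert v (insert u U)) v}"
      have "(Cand - insert u {y. E u y}) - Destr u \<subseteq> ?C'"
      proof
        fix v assume v: "v \<in> (Cand - insert u {y. E u y}) - Destr u"
        then have "v \<in> ?N - avoid E (insert u U - {p})"
          using avoid_ins_diff[of E u U p] by (auto simp: Cand_def)
        moreover have "good E EG W h (c / 2 * \<delta>) (insert v (insert u U)) v"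
          using v by (auto simp: Destr_def insert_commute)
        ultimately show "v \<in> ?C'" by blast
      qed
      hence "card ((Cand - insert u {y. E u y}) - Destr u) \<le> card ?C'"
        using fin_nbh by (intro card_mono) auto
      moreover have "real (card (Cand - insert u {y. E u y})) - real (card (Destr u))
          \<le> real (card ((Cand - insert u {y. E u y}) - Destr u))"
        by (rule real_card_diff) (use finC finD in auto)
      moreover have "c / 2 * \<delta> * real (card ?N) \<le> c / 2 * real (card Cand)"
        using Cge c0 by simp
      ultimately have "c / 2 * \<delta> * real (card ?N) \<le> real (card ?C')"
        using r hv cC4 by linarith
      then show False using u by simp
    qed
  qed
  have b1: "real (card (badset Cand)) < t" by (rule bad_small[OF CV Ct])
  have sumeq: "(\<Sum>u\<in>V. card (Destr u)) =
      (\<Sum>v\<in>Cand. card {u \<in> V. \<not> good E EG W h (c / 2 * \<delta>) (insert u (insert v U)) v})"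
    unfolding Destr_def by (rule card_swap_sum[OF finV finC])
  have "real (\<Sum>v\<in>Cand. card {u \<in> V. \<not> good E EG W h (c / 2 * \<delta>) (insert u (insert v U)) v})
      \<le> (\<Sum>v\<in>Cand. Mf c h * t)"
    unfolding of_nat_sum
  proof (rule sum_mono)
    fix v assume v: "v \<in> Cand"
    then have "v \<in> W" "good E EG W h \<delta> (insert v U) v" using CW by (auto simp: Cand_def)
    then show "real (card {u \<in> V. \<not> good E EG W h (c / 2 * \<delta>) (insert u (insert v U)) v}) \<le> Mf c h * t"
      using Suc.IH Suc(3,4,5) by blast
  qed
  hence sumV: "real (\<Sum>u\<in>V. card (Destr u)) \<le> real (card Cand) * (Mf c h * t)"
    using sumeq by simp
  have HV: "Heavy \<subseteq> V" by (auto simp: Heavy_def)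
  have "(\<Sum>u\<in>Heavy. c / 4 * real (card Cand)) \<le> (\<Sum>u\<in>Heavy. real (card (Destr u)))"
    by (rule sum_mono) (auto simp: Heavy_def)
  also have "\<dots> \<le> (\<Sum>u\<in>V. real (card (Destr u)))"
    by (rule sum_mono2[OF finV HV]) auto
  also have "\<dots> = real (\<Sum>u\<in>V. card (Destr u))" by simp
  finally have "real (card Heavy) * (c / 4 * real (card Cand)) \<le> real (card Cand) * (Mf c h * t)"
    using sumV by simp
  moreover have "real (card Cand) > 0" using Cc c0 by (smt (verit) divide_pos_pos)
  ultimately have "real (card Heavy) * (c / 4) \<le> Mf c h * t"
    by (smt (verit, ccfv_SIG) mult.commute mult.left_commute mult_le_cancel_left_pos)
  hence b2: "real (card Heavy) \<le> 4 / c * Mf c h * t" using c0 by (simp add: field_simps)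
  have "card {u \<in> V. \<not> good E EG W (Suc h) (c / 2 * \<delta>) (insert u U) p} \<le> card (badset Cand \<union> Heavy)"
    by (rule card_mono[OF _ sub]) (use finV in \<open>auto simp: badset_def Heavy_def\<close>)
  also have "\<dots> \<le> card (badset Cand) + card Heavy" by (rule card_Un_le)
  finally have "real (card {u \<in> V. \<not> good E EG W (Suc h) (c / 2 * \<delta>) (insert u U) p})
     \<le> real (card (badset Cand)) + real (card Heavy)" by linarith
  then show ?case using b1 b2 by (simp add: algebra_simps)
qed

end

fun beta :: "real \<Rightarrow> nat \<Rightarrow> real" where
  "beta cc 0 = 0"
| "beta cc (Suc h) = 2 * (beta cc h + Mf cc h)"

context ctx begin

lemma Mf_ge1: "Mf c h \<ge> 1"
proof (induction h)
  case 0 then show ?case by simp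
next
  case (Suc h)
  then have "0 \<le> 4 / c * Mf c h" using c0 by simp
  then show ?case by simp
qed

lemma Mf_mono: "h' \<le> h \<Longrightarrow> Mf c h' \<le> Mf c h"
proof (induction h)
  case 0 then show ?case by simp
next
  case (Suc h)
  have "Mf c h \<le> 4 / c * Mf c h"
  proof -
    have "1 \<le> 4 / c" using c0 c1 by (simp add: field_simps)
    then have "1 * Mf c h \<le> 4 / c * Mf c h" using Mf_ge1[of h] by (intro mult_right_mono) auto
    then show ?thesis by simp
  qed
  then have "Mf c h \<le> Mf c (Suc h)" by simp
  then show ?case using Suc by (auto simp: le_Suc_eq)
qed

lemma sum_nbh_swap:
  "(\<Sum>p\<in>W. card {v \<in> W. EG p v \<and> Q v}) = (\<Sum>v\<in>W. if Q v then card (nbh W EG v) else 0)"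
proof -
  have "(\<Sum>p\<in>W. card {v \<in> W. EG p v \<and> Q v}) = (\<Sum>v\<in>W. card {p \<in> W. EG p v \<and> Q v})"
    by (rule card_swap_sum[OF finW finW])
  also have "\<dots> = (\<Sum>v\<in>W. if Q v then card (nbh W EG v) else 0)"
  proof (rule sum.cong)
    fix v assume "v \<in> W"
    have "{p \<in> W. EG p v} = nbh W EG v" using EGsym by (auto simp: nbh_def)
    then show "card {p \<in> W. EG p v \<and> Q v} = (if Q v then card (nbh W EG v) else 0)" by auto
  qed simp
  finally show ?thesis .
qed


lemma root_sum:
  assumes cond: "\<And>h'. h' < K0 \<Longrightarrow> t \<le> (c/2)^h' * D \<and> 4 / c \<le> (c/2)^h' * D"
  shows "h \<le> K0 \<Longrightarrow> (\<Sum>p\<in>W. if good E EG W h ((c/2)^h) {p} p then 0 else real (card (nbh W EG p)))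
            \<le> beta c h * t * real (card W)"
proof (induction h)
  case 0
  have "good E EG W 0 ((c/2)^0) {p} p" for p by (simp add: avoid_def)
  then show ?case by simp
next
  case (Suc h)
  let ?Phi = "\<lambda>v. good E EG W h ((c/2)^h) {v} v"
  let ?Exc = "\<lambda>v. {u \<in> V. \<not> good E EG W h (c / 2 * (c/2)^h) (insert u {v}) v}"
  have hK: "h < K0" using Suc.prems by simp
  have IH: "(\<Sum>p\<in>W. if ?Phi p then 0 else real (card (nbh W EG p))) \<le> beta c h * t * real (card W)"
    by (rule Suc.IH) (use Suc.prems in simp)
  have cnd: "t \<le> (c/2)^h * D" "4 / c \<le> (c/2)^h * D" using cond[OF hK] by auto
  have dpos: "0 \<le> (c/2)^h" using c0 by simp
  define A where "A p = card {v \<in> W. EG p v \<and> \<not> ?Phi v}" for p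
  define B where "B p = card {v \<in> W. EG p v \<and> ?Phi v \<and> p \<in> ?Exc v}" for p
  have termb: "(if good E EG W (Suc h) ((c/2)^Suc h) {p} p then 0 else real (card (nbh W EG p)))
      \<le> 2 * (real (A p) + real (B p))" if pW: "p \<in> W" for p
  proof (cases "good E EG W (Suc h) ((c/2)^Suc h) {p} p")
    case True then show ?thesis by simp
  next
    case False
    let ?X = "{v \<in> nbh W EG p - avoid E ({p} - {p}). good E EG W h ((c/2)^Suc h) (insert v {p}) v}"
    have X: "real (card ?X) < (c/2)^Suc h * real (card (nbh W EG p))" using False by simp
    have "nbh W EG p \<subseteq> ({v \<in> W. EG p v \<and> \<not> ?Phi v} \<union> {v \<in> W. EG p v \<and> ?Phi v \<and> p \<in> ?Exc v}) \<union> ?X"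
    proof
      fix v assume v: "v \<in> nbh W EG p"
      show "v \<in> ({v \<in> W. EG p v \<and> \<not> ?Phi v} \<union> {v \<in> W. EG p v \<and> ?Phi v \<and> p \<in> ?Exc v}) \<union> ?X"
      proof (cases "?Phi v \<and> p \<notin> ?Exc v")
        case True
        then have "good E EG W h (c / 2 * (c/2)^h) (insert p {v}) v" using pW WV by blast
        then have "good E EG W h ((c/2)^Suc h) (insert v {p}) v" by (simp add: insert_commute)
        moreover have "v \<in> nbh W EG p - avoid E ({p} - {p})" using v by (simp add: avoid_def)
        ultimately show ?thesis by blast
      next
        case False then show ?thesis using v by (auto simp: nbh_def)
      qed
    qed
    then have "card (nbh W EG p) \<le> card ({v \<in> W. EG p v \<and> \<not> ?Phi v} \<union> {v \<in> W. EG p v \<and> ?Phi v \<and> p \<in> ?Exc v} \<union> ?X)"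
      using finW fin_nbh by (intro card_mono) auto
    also have "\<dots> \<le> card ({v \<in> W. EG p v \<and> \<not> ?Phi v} \<union> {v \<in> W. EG p v \<and> ?Phi v \<and> p \<in> ?Exc v}) + card ?X"
      by (rule card_Un_le)
    also have "\<dots> \<le> A p + B p + card ?X"
    proof -
      have "card ({v \<in> W. EG p v \<and> \<not> ?Phi v} \<union> {v \<in> W. EG p v \<and> ?Phi v \<and> p \<in> ?Exc v})
         \<le> A p + B p" unfolding A_def B_def by (rule card_Un_le)
      then show ?thesis by linarith
    qed
    finally have 1: "real (card (nbh W EG p)) \<le> real (A p) + real (B p) + real (card ?X)" by linarith
    have "(c/2)^Suc h \<le> (c/2)^1" using c0 c1 by (intro power_decreasing) auto
    then have "(c/2)^Suc h \<le> 1/2" using c1 by simp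
    then have "(c/2)^Suc h * real (card (nbh W EG p)) \<le> 1/2 * real (card (nbh W EG p))"
      by (intro mult_right_mono) auto
    then show ?thesis using False 1 X by simp
  qed
  have sA: "(\<Sum>p\<in>W. real (A p)) \<le> beta c h * t * real (card W)"
  proof -
    have "(\<Sum>p\<in>W. real (A p)) = real (\<Sum>p\<in>W. A p)" by simp
    also have "(\<Sum>p\<in>W. A p) = (\<Sum>v\<in>W. if \<not> ?Phi v then card (nbh W EG v) else 0)"
      unfolding A_def by (rule sum_nbh_swap)
    also have "real \<dots> = (\<Sum>p\<in>W. if ?Phi p then 0 else real (card (nbh W EG p)))"
      by (simp add: of_nat_sum) (intro sum.cong, auto)
    finally show ?thesis using IH by simp
  qed
  have sB: "(\<Sum>p\<in>W. real (B p)) \<le> Mf c h * t * real (card W)"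
  proof -
    have "(\<Sum>p\<in>W. B p) = (\<Sum>v\<in>W. card {p \<in> W. EG p v \<and> ?Phi v \<and> p \<in> ?Exc v})"
      unfolding B_def by (rule card_swap_sum[OF finW finW])
    hence "real (\<Sum>p\<in>W. B p) = real (\<Sum>v\<in>W. card {p \<in> W. EG p v \<and> ?Phi v \<and> p \<in> ?Exc v})"
      by (rule arg_cong)
    hence "(\<Sum>p\<in>W. real (B p)) = (\<Sum>v\<in>W. real (card {p \<in> W. EG p v \<and> ?Phi v \<and> p \<in> ?Exc v}))"
      by (simp only: of_nat_sum)
    also have "\<dots> \<le> (\<Sum>v\<in>W. Mf c h * t)"
    proof (rule sum_mono)
      fix v assume vW: "v \<in> W"
      show "real (card {p \<in> W. EG p v \<and> ?Phi v \<and> p \<in> ?Exc v}) \<le> Mf c h * t"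
      proof (cases "?Phi v")
        case True
        have "{p \<in> W. EG p v \<and> ?Phi v \<and> p \<in> ?Exc v} \<subseteq> ?Exc v" by auto
        then have "card {p \<in> W. EG p v \<and> ?Phi v \<and> p \<in> ?Exc v} \<le> card (?Exc v)"
          using finV by (intro card_mono) auto
        moreover have "real (card (?Exc v)) \<le> Mf c h * t"
          by (rule robust[OF vW cnd dpos True])
        ultimately show ?thesis by linarith
      next
        case False
        have "0 \<le> Mf c h * t" using Mf_ge1[of h] t0 by simp
        then show ?thesis using False by simp
      qed
    qed
    also have "\<dots> = Mf c h * t * real (card W)" by simp
    finally show ?thesis .
  qed
  have "(\<Sum>p\<in>W. if good E EG W (Suc h) ((c/2)^Suc h) {p} p then 0 else real (card (nbh W EG p)))
      \<le> (\<Sum>p\<in>W. 2 * (real (A p) + real (B p)))"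
    by (rule sum_mono) (rule termb)
  also have "\<dots> = 2 * ((\<Sum>p\<in>W. real (A p)) + (\<Sum>p\<in>W. real (B p)))"
    by (simp add: sum.distrib sum_distrib_left)
  also have "\<dots> \<le> 2 * (beta c h * t * real (card W) + Mf c h * t * real (card W))"
    using sA sB by simp
  also have "\<dots> = beta c (Suc h) * t * real (card W)" by (simp add: algebra_simps)
  finally show ?case .
qed

lemma root_exists:
  assumes cond: "\<And>h'. h' < K0 \<Longrightarrow> t \<le> (c/2)^h' * D \<and> 4 / c \<le> (c/2)^h' * D"
    and big: "beta c K0 * t < D" and Wne: "W \<noteq> {}"
  shows "\<exists>r\<in>W. good E EG W K0 ((c/2)^K0) {r} r"
proof (rule ccontr)
  assume "\<not> ?thesis"
  then have "(\<Sum>p\<in>W. if good E EG W K0 ((c/2)^K0) {p} p then 0 else real (card (nbh W EG p)))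
     = (\<Sum>p\<in>W. real (card (nbh W EG p)))" by (intro sum.cong) auto
  also have "\<dots> \<ge> (\<Sum>p\<in>W. D)" by (rule sum_mono) (rule degW)
  moreover have "(\<Sum>p\<in>W. if good E EG W K0 ((c/2)^K0) {p} p then 0 else real (card (nbh W EG p)))
     \<le> beta c K0 * t * real (card W)" by (rule root_sum[OF cond order.refl])
  ultimately have "D * real (card W) \<le> beta c K0 * t * real (card W)"
    by (simp add: mult.commute)
  moreover have "real (card W) > 0" using Wne finW by (simp add: card_gt_0_iff)
  ultimately show False using big by (simp add: mult_le_cancel_right)
qed

end

context ctx begin

lemma embed:
  fixes k :: nat and par :: "nat \<Rightarrow> nat" and \<delta>0 dm :: real
  assumes parlt: "\<And>j. 0 < j \<Longrightarrow> j < k \<Longrightarrow> par j < j"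
    and rW: "r \<in> W" and rgood: "good E EG W k \<delta>0 {r} r"
    and dm: "\<And>m. m < k \<Longrightarrow> dm \<le> \<delta>0 * (c/2)^m"
    and dm_t: "t \<le> dm * D" and dm_c: "4 / c \<le> dm * D"
    and dm_k: "real k * Mf c k * t < dm * D" and dm0: "0 \<le> dm"
  shows "1 \<le> m \<Longrightarrow> m \<le> k \<Longrightarrow> \<exists>us. length us = m \<and> distinct us \<and> set us \<subseteq> W \<and>
     (\<forall>j. 0 < j \<longrightarrow> j < m \<longrightarrow> EG (us ! par j) (us ! j)) \<and>
     (\<forall>i j. i < j \<longrightarrow> j < m \<longrightarrow> E (us ! i) (us ! j) \<longrightarrow> i = par j) \<and>
     (\<forall>i < m. good E EG W (k - i) (\<delta>0 * (c/2)^(m - 1)) (set us) (us ! i))"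
proof (induction m)
  case 0 then show ?case by simp
next
  case (Suc m)
  show ?case
  proof (cases "m = 0")
    case True
    then show ?thesis using rW rgood by (intro exI[of _ "[r]"]) auto
  next
    case False
    then have m1: "1 \<le> m" and mk: "m < k" using Suc.prems by auto
    from Suc.IH[OF m1 less_imp_le[OF mk]] obtain us where
      len: "length us = m" and dist: "distinct us" and sW: "set us \<subseteq> W"
      and edg: "\<forall>j. 0 < j \<longrightarrow> j < m \<longrightarrow> EG (us ! par j) (us ! j)"
      and ind: "\<forall>i j. i < j \<longrightarrow> j < m \<longrightarrow> E (us ! i) (us ! j) \<longrightarrow> i = par j"
      and gd: "\<forall>i < m. good E EG W (k - i) (\<delta>0 * (c/2)^(m - 1)) (set us) (us ! i)"
      by blast
    define \<delta> where "\<delta> = \<delta>0 * (c/2)^(m - 1)"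
    define U where "U = set us"
    define p where "p = par m"
    have pm: "p < m" using parlt[of m] m1 mk by (simp add: p_def)
    define up where "up = us ! p"
    have upW: "up \<in> W" using sW pm len by (auto simp: up_def)
    have dmd: "dm \<le> \<delta>" unfolding \<delta>_def by (rule dm) (use mk in simp)
    have d0: "0 \<le> \<delta>" using dmd dm0 by simp
    have Dpos: "0 \<le> D"
    proof -
      have "0 < 4 / c" using c0 by simp
      then have "0 < dm * D" using dm_c by linarith
      then show ?thesis using dm0 by (simp add: zero_less_mult_iff)
    qed
    have dD: "dm * D \<le> \<delta> * D" using dmd Dpos by (simp add: mult_right_mono)
    define hh where "hh = k - p - 1"
    have kp: "k - p = Suc hh" using pm mk by (simp add: hh_def)
    have g0: "good E EG W (k - p) \<delta> U up"
      using gd pm by (simp add: \<delta>_def U_def up_def)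
    have gup: "good E EG W (Suc hh) \<delta> U up"
      using g0 unfolding kp .
    define Cand where "Cand = {v \<in> nbh W EG up - avoid E (U - {up}). good E EG W hh \<delta> (insert v U) v}"
    have Cge: "\<delta> * real (card (nbh W EG up)) \<le> real (card Cand)"
      using gup by (simp add: Cand_def)
    have "\<delta> * D \<le> \<delta> * real (card (nbh W EG up))" using degW[OF upW] d0 by (simp add: mult_left_mono)
    hence Cbig: "real k * Mf c k * t < real (card Cand)" using Cge dD dm_k by linarith
    define Exc where "Exc i = {u \<in> V. \<not> good E EG W (k - i) (c / 2 * \<delta>) (insert u U) (us ! i)}" for i
    have excb: "real (card (Exc i)) \<le> Mf c k * t" if "i < m" for i
    proof -
      have "us ! i \<in> W" using sW that len by auto
      moreover have "good E EG W (k - i) \<delta> U (us ! i)" using gd that by (simp add: \<delta>_def U_def)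
      ultimately have "real (card (Exc i)) \<le> Mf c (k - i) * t"
        unfolding Exc_def using robust dm_t dm_c dD d0 by (meson order_trans)
      also have "\<dots> \<le> Mf c k * t" using Mf_mono[of "k - i" k] t0 by simp
      finally show ?thesis .
    qed
    have "real (card (\<Union>i<m. Exc i)) \<le> real (\<Sum>i<m. card (Exc i))"
      using card_UN_le[of "{..<m}" Exc] by (simp only: of_nat_le_iff finite_lessThan)
    also have "\<dots> = (\<Sum>i<m. real (card (Exc i)))" by simp
    also have "\<dots> \<le> (\<Sum>i<m. Mf c k * t)" by (rule sum_mono) (simp add: excb)
    also have "\<dots> = real m * (Mf c k * t)" by simp
    also have "\<dots> \<le> real k * (Mf c k * t)"
      using mk Mf_ge1[of k] t0 by (intro mult_right_mono) auto
    finally have "real (card (\<Union>i<m. Exc i)) < real (card Cand)" using Cbig by simp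
    then have "\<not> Cand \<subseteq> (\<Union>i<m. Exc i)"
      using card_mono[of "\<Union>i<m. Exc i" Cand] finV by (auto simp: Exc_def)
    then obtain v where vC: "v \<in> Cand" and vE: "\<And>i. i < m \<Longrightarrow> v \<notin> Exc i" by blast
    have vnb: "v \<in> nbh W EG up" and vav: "v \<notin> avoid E (U - {up})"
      and vg: "good E EG W hh \<delta> (insert v U) v" using vC by (auto simp: Cand_def)
    have vW: "v \<in> W" using vnb by (simp add: nbh_def)
    have vV: "v \<in> V" using vW WV by auto
    have EGuv: "EG up v" using vnb by (simp add: nbh_def)
    have vnu: "v \<noteq> up" using EGuv EGE Eirr by blast
    have vU: "v \<notin> U" using vav vnu by (auto simp: avoid_def)
    have gi: "good E EG W (k - i) (c / 2 * \<delta>) (insert v U) (us ! i)" if "i < m" for i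
      using vE[OF that] vV by (simp add: Exc_def)
    have cd: "c / 2 * \<delta> = \<delta>0 * (c/2)^(Suc m - 1)"
      using m1 by (simp add: \<delta>_def power_eq_if)
    let ?us = "us @ [v]"
    have nth_old: "?us ! i = us ! i" if "i < m" for i using that len by (simp add: nth_append)
    have nth_new: "?us ! m = v" using len by (simp add: nth_append)
    show ?thesis
    proof (intro exI[of _ ?us] conjI allI impI)
      show "length ?us = Suc m" using len by simp
      show "distinct ?us" using dist vU by (simp add: U_def)
      show "set ?us \<subseteq> W" using sW vW by simp
    next
      fix j assume j: "0 < j" "j < Suc m"
      show "EG (?us ! par j) (?us ! j)"
      proof (cases "j = m")
        case True then show ?thesis using nth_old[OF pm] nth_new EGuv by (simp add: p_def up_def)
      next
        case False
        then have "j < m" using j by simp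
        moreover have "par j < j" using parlt[of j] j mk by simp
        ultimately show ?thesis using edg j nth_old by simp
      qed
    next
      fix i j assume ij: "i < j" "j < Suc m" and e: "E (?us ! i) (?us ! j)"
      show "i = par j"
      proof (cases "j = m")
        case False
        then have "j < m" using ij by simp
        then show ?thesis using ind ij e nth_old by simp
      next
        case True
        then have im: "i < m" using ij by simp
        have e': "E (us ! i) v" using e True nth_old[OF im] nth_new by simp
        show ?thesis
        proof (rule ccontr)
          assume "i \<noteq> par j"
          then have "i \<noteq> p" using True by (simp add: p_def)
          then have "us ! i \<noteq> up" using dist im pm len by (simp add: up_def nth_eq_iff_index_eq)
          then have "us ! i \<in> U - {up}" using im len by (simp add: U_def)
          then have "v \<in> avoid E (U - {up})" using e' by (auto simp: avoid_def)
          then show False using vav by simp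
        qed
      qed
    next
      fix i assume i: "i < Suc m"
      show "good E EG W (k - i) (\<delta>0 * (c/2)^(Suc m - 1)) (set ?us) (?us ! i)"
      proof (cases "i = m")
        case False
        then have "i < m" using i by simp
        then show ?thesis using gi[of i] nth_old cd by (simp add: U_def)
      next
        case True
        have "good E EG W (k - m) \<delta> (insert v U) v"
          by (rule good_mono_h[OF finW _ vg]) (use pm in \<open>simp add: hh_def\<close>)
        then have "good E EG W (k - m) (c / 2 * \<delta>) (insert v U) v"
        proof (rule good_mono_delta[OF finW, rotated])
          have "c / 2 * \<delta> \<le> 1 * \<delta>" by (rule mult_right_mono) (use c1 d0 in auto)
          then show "c / 2 * \<delta> \<le> \<delta>" by simp
        qed
        then show ?thesis using True nth_new cd by (simp add: U_def)
      qed
    qed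
  qed
qed

end

lemma rtranclp_cross:
  assumes "R\<^sup>*\<^sup>* a b" "a \<in> S" "b \<notin> S"
  shows "\<exists>x y. R x y \<and> x \<in> S \<and> y \<notin> S"
  using assms
proof (induction rule: rtranclp_induct)
  case base then show ?case by simp
next
  case (step y z)
  show ?case
  proof (cases "y \<in> S")
    case True then show ?thesis using step by blast
  next
    case False then show ?thesis using step by blast
  qed
qed

definition pathprop :: "('a \<Rightarrow> 'a \<Rightarrow> bool) \<Rightarrow> 'a set \<Rightarrow> bool" where
  "pathprop ET S \<longleftrightarrow> (\<forall>a\<in>S. \<forall>b\<in>S. \<exists>P. P \<noteq> [] \<and> hd P = a \<and> last P = b \<and> distinct P \<and> set P \<subseteq> S \<and>
      (\<forall>i. Suc i < length P \<longrightarrow> ET (P ! i) (P ! Suc i)))"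

lemma pathprop_single: "pathprop ET {r}"
  unfolding pathprop_def by (intro ballI exI[of _ "[r]"]) auto

lemma pathprop_insert:
  assumes pp: "pathprop ET S" and x: "x \<in> S" and v: "v \<notin> S" and e1: "ET x v" and e2: "ET v x"
  shows "pathprop ET (insert v S)"
  unfolding pathprop_def
proof (intro ballI)
  fix a b assume a: "a \<in> insert v S" and b: "b \<in> insert v S"
  show "\<exists>P. P \<noteq> [] \<and> hd P = a \<and> last P = b \<and> distinct P \<and> set P \<subseteq> insert v S \<and>
      (\<forall>i. Suc i < length P \<longrightarrow> ET (P ! i) (P ! Suc i))"
  proof (cases "a = v")
    case av: True
    show ?thesis
    proof (cases "b = v")
      case True then show ?thesis using av by (intro exI[of _ "[v]"]) auto
    next
      case False
      then have "b \<in> S" using b by simp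
      then obtain P where P: "P \<noteq> []" "hd P = x" "last P = b" "distinct P" "set P \<subseteq> S"
        "\<forall>i. Suc i < length P \<longrightarrow> ET (P ! i) (P ! Suc i)"
        using pp x unfolding pathprop_def by blast
      show ?thesis
      proof (intro exI[of _ "v # P"] conjI allI impI)
        show "last (v # P) = b" using P by simp
        show "distinct (v # P)" using P v by auto
        show "set (v # P) \<subseteq> insert v S" using P by auto
      next
        fix i assume i: "Suc i < length (v # P)"
        show "ET ((v # P) ! i) ((v # P) ! Suc i)"
        proof (cases i)
          case 0 then show ?thesis using P e2 by (simp add: hd_conv_nth)
        next
          case (Suc i') then show ?thesis using P i by simp
        qed
      qed (use av in auto)
    qed
  next
    case anv: False
    then have aS: "a \<in> S" using a by simp
    show ?thesis
    proof (cases "b = v")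
      case bv: True
      obtain P where P: "P \<noteq> []" "hd P = a" "last P = x" "distinct P" "set P \<subseteq> S"
        "\<forall>i. Suc i < length P \<longrightarrow> ET (P ! i) (P ! Suc i)"
        using pp x aS unfolding pathprop_def by blast
      show ?thesis
      proof (intro exI[of _ "P @ [v]"] conjI allI impI)
        show "hd (P @ [v]) = a" using P by simp
        show "distinct (P @ [v])" using P v by auto
        show "set (P @ [v]) \<subseteq> insert v S" using P by auto
      next
        fix i assume i: "Suc i < length (P @ [v])"
        show "ET ((P @ [v]) ! i) ((P @ [v]) ! Suc i)"
        proof (cases "Suc i < length P")
          case True then show ?thesis using P by (simp add: nth_append)
        next
          case False
          then have "Suc i = length P" using i by simp
          then have ii: "i = length P - 1" by simp
          then have "(P @ [v]) ! i = last P" "(P @ [v]) ! Suc i = v"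
            using P \<open>Suc i = length P\<close> by (auto simp: nth_append last_conv_nth)
          then show ?thesis using P e1 by simp
        qed
      qed (use bv in auto)
    next
      case False
      then have "b \<in> S" using b by simp
      then obtain P where P: "P \<noteq> []" "hd P = a" "last P = b" "distinct P" "set P \<subseteq> S"
        "\<forall>i. Suc i < length P \<longrightarrow> ET (P ! i) (P ! Suc i)"
        using pp aS unfolding pathprop_def by blast
      then show ?thesis by (intro exI[of _ P]) auto
    qed
  qed
qed

lemma no_two_nbrs:
  assumes acyc: "acyclic_graph VT ET" and pp: "pathprop ET S" and SV: "S \<subseteq> VT"
    and x: "x \<in> S" and a: "a \<in> S" and xa: "x \<noteq> a" and v: "v \<notin> S" and vV: "v \<in> VT"
    and e1: "ET a v" and e2: "ET v x"
  shows False
proof -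
  obtain P where P: "P \<noteq> []" "hd P = x" "last P = a" "distinct P" "set P \<subseteq> S"
    "\<forall>i. Suc i < length P \<longrightarrow> ET (P ! i) (P ! Suc i)"
    using pp x a unfolding pathprop_def by blast
  have lP: "length P \<ge> 2"
  proof (rule ccontr)
    assume "\<not> ?thesis"
    moreover have "length P \<noteq> 0" using P(1) by simp
    ultimately have "length P = 1" by linarith
    then obtain y where "P = [y]" by (metis One_nat_def length_0_conv length_Suc_conv)
    then have "hd P = last P" by simp
    then show False using P xa by simp
  qed
  have "is_cycle VT ET (P @ [v])"
    unfolding is_cycle_def
  proof (intro conjI allI impI)
    show "3 \<le> length (P @ [v])" using lP by simp
    show "distinct (P @ [v])" using P v by auto
    show "set (P @ [v]) \<subseteq> VT" using P SV vV by auto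
    show "ET (last (P @ [v])) (hd (P @ [v]))" using P e2 by simp
  next
    fix i assume i: "Suc i < length (P @ [v])"
    show "ET ((P @ [v]) ! i) ((P @ [v]) ! Suc i)"
    proof (cases "Suc i < length P")
      case True then show ?thesis using P by (simp add: nth_append)
    next
      case False
      then have "Suc i = length P" using i by simp
      then have ii: "i = length P - 1" by simp
      then have "(P @ [v]) ! i = last P" "(P @ [v]) ! Suc i = v"
        using P \<open>Suc i = length P\<close> by (auto simp: nth_append last_conv_nth)
      then show ?thesis using P e1 by simp
    qed
  qed
  then show False using acyc unfolding acyclic_graph_def by blast
qed

lemma tree_order_aux:
  assumes tree: "is_tree VT ET"
  shows "1 \<le> m \<Longrightarrow> m \<le> card VT \<Longrightarrow> \<exists>xs par. length xs = m \<and> distinct xs \<and> set xs \<subseteq> VT \<and>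
     (\<forall>j. 0 < j \<longrightarrow> j < m \<longrightarrow> par j < j \<and> ET (xs ! par j) (xs ! j)) \<and>
     (\<forall>i j. i < j \<longrightarrow> j < m \<longrightarrow> ET (xs ! i) (xs ! j) \<longrightarrow> i = par j) \<and> pathprop ET (set xs)"
proof (induction m)
  case 0 then show ?case by simp
next
  case (Suc m)
  have sg: "simple_graph VT ET" and ne: "VT \<noteq> {}" and con: "connected_graph VT ET"
    and acyc: "acyclic_graph VT ET" using tree by (auto simp: is_tree_def)
  have finVT: "finite VT" using sg by (simp add: simple_graph_def)
  have sym: "ET u w \<Longrightarrow> ET w u" for u w using sg by (simp add: simple_graph_def)
  show ?case
  proof (cases "m = 0")
    case True
    obtain r where r: "r \<in> VT" using ne by blast
    show ?thesis using True r pathprop_single[of ET r]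
      by (intro exI[of _ "[r]"] exI[of _ "\<lambda>_. 0"]) auto
  next
    case False
    then have m1: "1 \<le> m" and mk: "m < card VT" using Suc.prems by auto
    from Suc.IH[OF m1 less_imp_le[OF mk]] obtain xs par where
      len: "length xs = m" and dist: "distinct xs" and sV: "set xs \<subseteq> VT"
      and ord: "\<forall>j. 0 < j \<longrightarrow> j < m \<longrightarrow> par j < j \<and> ET (xs ! par j) (xs ! j)"
      and uniq: "\<forall>i j. i < j \<longrightarrow> j < m \<longrightarrow> ET (xs ! i) (xs ! j) \<longrightarrow> i = par j"
      and pp: "pathprop ET (set xs)" by blast
    have "card (set xs) = m" using dist len by (simp add: distinct_card)
    then have "set xs \<noteq> VT" using mk by auto
    then obtain w where w: "w \<in> VT" "w \<notin> set xs" using sV by blast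
    have r: "xs ! 0 \<in> set xs" using m1 len by simp
    have "(\<lambda>x y. x \<in> VT \<and> y \<in> VT \<and> ET x y)\<^sup>*\<^sup>* (xs ! 0) w"
      using con r sV w unfolding connected_graph_def by blast
    from rtranclp_cross[OF this r w(2)] obtain x v where
      xv: "x \<in> VT" "v \<in> VT" "ET x v" "x \<in> set xs" "v \<notin> set xs" by blast
    obtain ix where ix: "ix < m" "xs ! ix = x" using xv(4) len by (metis in_set_conv_nth)
    define par' where "par' = par(m := ix)"
    define xs' where "xs' = xs @ [v]"
    have old: "xs' ! i = xs ! i" if "i < m" for i using that len by (simp add: xs'_def nth_append)
    have new: "xs' ! m = v" using len by (simp add: xs'_def nth_append)
    have un: "i = ix" if "i < m" "ET (xs ! i) v" for i
    proof (rule ccontr)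
      assume "i \<noteq> ix"
      then have "xs ! i \<noteq> xs ! ix" using dist that(1) ix(1) len by (simp add: nth_eq_iff_index_eq)
      then have "xs ! i \<noteq> x" using ix(2) by simp
      moreover have "xs ! i \<in> set xs" using that(1) len by simp
      ultimately show False
        using no_two_nbrs[OF acyc pp sV xv(4) _ _ xv(5) xv(2) that(2) sym[OF xv(3)]] by blast
    qed
    have L: "length xs' = Suc m" using len by (simp add: xs'_def)
    have D: "distinct xs'" using dist xv(5) by (simp add: xs'_def)
    have S: "set xs' \<subseteq> VT" using sV xv(2) by (simp add: xs'_def)
    have PP: "pathprop ET (set xs')"
      using pathprop_insert[OF pp xv(4) xv(5) xv(3) sym[OF xv(3)]] by (simp add: xs'_def)
    have A: "\<forall>j. 0 < j \<longrightarrow> j < Suc m \<longrightarrow> par' j < j \<and> ET (xs' ! par' j) (xs' ! j)"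
    proof (intro allI impI)
      fix j assume j: "0 < j" "j < Suc m"
      show "par' j < j \<and> ET (xs' ! par' j) (xs' ! j)"
      proof (cases "j = m")
        case True then show ?thesis using ix old new xv(3) by (simp add: par'_def)
      next
        case False
        then have jm: "j < m" using j by simp
        then have pj: "par j < j" "ET (xs ! par j) (xs ! j)" using ord j by auto
        have "par j < m" using pj jm by simp
        then show ?thesis using pj old[OF jm] old[of "par j"] False by (simp add: par'_def)
      qed
    qed
    have B: "\<forall>i j. i < j \<longrightarrow> j < Suc m \<longrightarrow> ET (xs' ! i) (xs' ! j) \<longrightarrow> i = par' j"
    proof (intro allI impI)
      fix i j assume ij: "i < j" "j < Suc m" and e: "ET (xs' ! i) (xs' ! j)"
      show "i = par' j"
      proof (cases "j = m")
        case True
        then have "i < m" using ij by simp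
        then show ?thesis using un[of i] e old new True by (simp add: par'_def)
      next
        case False
        then have "j < m" using ij by simp
        then show ?thesis using uniq ij e old False by (simp add: par'_def)
      qed
    qed
    show ?thesis using L D S PP A B by blast
  qed
qed

lemma tree_order:
  assumes tree: "is_tree VT ET"
  shows "\<exists>xs par. length xs = card VT \<and> distinct xs \<and> set xs = VT \<and>
     (\<forall>j. 0 < j \<longrightarrow> j < card VT \<longrightarrow> par j < j \<and> ET (xs ! par j) (xs ! j)) \<and>
     (\<forall>i j. i < j \<longrightarrow> j < card VT \<longrightarrow> ET (xs ! i) (xs ! j) \<longrightarrow> i = par j)"
proof -
  have sg: "simple_graph VT ET" and ne: "VT \<noteq> {}" using tree by (auto simp: is_tree_def)
  have finVT: "finite VT" using sg by (simp add: simple_graph_def)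
  have "1 \<le> card VT" using ne finVT by (simp add: Suc_le_eq card_gt_0_iff)
  from tree_order_aux[OF tree this order.refl] obtain xs par where
    H: "length xs = card VT" "distinct xs" "set xs \<subseteq> VT"
     "\<forall>j. 0 < j \<longrightarrow> j < card VT \<longrightarrow> par j < j \<and> ET (xs ! par j) (xs ! j)"
     "\<forall>i j. i < j \<longrightarrow> j < card VT \<longrightarrow> ET (xs ! i) (xs ! j) \<longrightarrow> i = par j" by blast
  have "set xs = VT" using card_subset_eq[OF finVT H(3)] H(1,2) by (simp add: distinct_card)
  then show ?thesis using H by blast
qed

lemma edges_remove:
  assumes fin: "finite W0" and sym: "\<And>u v. EG u v \<Longrightarrow> EG v u"
  shows "num_edges W0 EG \<le> num_edges (W0 - {w}) EG + card {y \<in> W0. EG w y}"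
proof -
  let ?ES = "\<lambda>W. {{u, v} | u v. u \<in> W \<and> v \<in> W \<and> EG u v}"
  have sub: "?ES W0 \<subseteq> ?ES (W0 - {w}) \<union> (\<lambda>y. {w, y}) ` {y \<in> W0. EG w y}"
  proof
    fix e assume "e \<in> ?ES W0"
    then obtain u v where e: "e = {u, v}" "u \<in> W0" "v \<in> W0" "EG u v" by blast
    show "e \<in> ?ES (W0 - {w}) \<union> (\<lambda>y. {w, y}) ` {y \<in> W0. EG w y}"
    proof (cases "u = w")
      case True then show ?thesis using e by blast
    next
      case uw: False
      show ?thesis
      proof (cases "v = w")
        case True
        then have "e = {w, u}" "EG w u" using e sym by auto
        then show ?thesis using e by blast
      next
        case False then show ?thesis using e uw by blast
      qed
    qed
  qed
  have "?ES (W0 - {w}) \<subseteq> (\<lambda>(u, v). {u, v}) ` ((W0 - {w}) \<times> (W0 - {w}))" by auto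
  then have fin1: "finite (?ES (W0 - {w}))" using fin by (meson finite_Diff finite_SigmaI finite_imageI finite_subset)
  have fin2: "finite ((\<lambda>y. {w, y}) ` {y \<in> W0. EG w y})" using fin by simp
  have "card (?ES W0) \<le> card (?ES (W0 - {w}) \<union> (\<lambda>y. {w, y}) ` {y \<in> W0. EG w y})"
    by (rule card_mono[OF _ sub]) (use fin1 fin2 in simp)
  also have "\<dots> \<le> card (?ES (W0 - {w})) + card ((\<lambda>y. {w, y}) ` {y \<in> W0. EG w y})" by (rule card_Un_le)
  also have "card ((\<lambda>y. {w, y}) ` {y \<in> W0. EG w y}) \<le> card {y \<in> W0. EG w y}" by (rule card_image_le) (use fin in simp)
  finally show ?thesis unfolding num_edges_def by simp
qed

lemma mindeg:
  "finite W0 \<Longrightarrow> (\<And>u v. EG u v \<Longrightarrow> EG v u) \<Longrightarrow> D * real (card W0) < real (num_edges W0 EG) \<Longrightarrow>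
   \<exists>W \<subseteq> W0. W \<noteq> {} \<and> (\<forall>w\<in>W. D \<le> real (card {y \<in> W. EG w y}))"
proof (induction "card W0" arbitrary: W0 rule: less_induct)
  case less
  show ?case
  proof (cases "\<forall>w\<in>W0. D \<le> real (card {y \<in> W0. EG w y})")
    case True
    have "W0 \<noteq> {}"
    proof
      assume "W0 = {}"
      then have "num_edges W0 EG = 0" by (simp add: num_edges_def)
      then show False using less.prems(3) \<open>W0 = {}\<close> by simp
    qed
    then show ?thesis using True by blast
  next
    case False
    then obtain w where w: "w \<in> W0" "real (card {y \<in> W0. EG w y}) < D" by (auto simp: not_le)
    let ?W1 = "W0 - {w}"
    have cW1: "card ?W1 < card W0" by (rule card_Diff1_less[OF less.prems(1) w(1)])
    have cpos: "card W0 \<ge> 1" using w(1) less.prems(1) using cW1 by linarith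
    have cW1': "real (card ?W1) = real (card W0) - 1" using w(1) less.prems(1) cpos
      by (simp add: card_Diff_singleton of_nat_diff)
    have "num_edges W0 EG \<le> num_edges ?W1 EG + card {y \<in> W0. EG w y}"
      by (rule edges_remove[OF less.prems(1)]) (use less.prems(2) in blast)
    then have "real (num_edges W0 EG) \<le> real (num_edges ?W1 EG) + real (card {y \<in> W0. EG w y})" by linarith
    moreover have "D * real (card W0) = D * real (card ?W1) + D" unfolding cW1' by (simp add: algebra_simps)
    ultimately have "D * real (card ?W1) < real (num_edges ?W1 EG)"
      using less.prems(3) w(2) by linarith
    from less.hyps[OF cW1 _ less.prems(2) this] less.prems(1) obtain W where
      "W \<subseteq> ?W1" "W \<noteq> {}" "\<forall>w\<in>W. D \<le> real (card {y \<in> W. EG w y})" by auto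
    then show ?thesis by blast
  qed
qed

lemma Mf_ge1': "0 < cc \<Longrightarrow> Mf cc h \<ge> 1"
proof (induction h)
  case 0 then show ?case by simp
next
  case (Suc h)
  then have "0 \<le> 4 / cc * Mf cc h" by simp
  then show ?case by simp
qed

lemma beta_ge0: "0 < cc \<Longrightarrow> beta cc h \<ge> 0"
proof (induction h)
  case 0 then show ?case by simp
next
  case (Suc h)
  then show ?case using Mf_ge1'[of cc h] by simp
qed

theorem theorem1p7:
  fixes VT :: "'b set" and ET :: "'b \<Rightarrow> 'b \<Rightarrow> bool" and c :: real
  assumes "is_tree VT ET" and "c > 0"
  shows "\<exists>C::real. C > 1 \<and>
    (\<forall>(V :: nat set) (E :: nat \<Rightarrow> nat \<Rightarrow> bool) (t :: real) (EG :: nat \<Rightarrow> nat \<Rightarrow> bool).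
       simple_graph V E \<longrightarrow> V \<noteq> {} \<longrightarrow> t > 0 \<longrightarrow> sparse c t V E \<longrightarrow>
       simple_graph V EG \<longrightarrow> (\<forall>u v. EG u v \<longrightarrow> E u v) \<longrightarrow>
       real (num_edges V EG) \<ge> C * t * real (card V) \<longrightarrow>
       (\<exists>f. induced_copy VT ET V EG E f))"
proof -
  note tree = assms(1)
  define c' where "c' = min c (1/2)"
  have c'0: "0 < c'" and c'1: "c' \<le> 1/2" and c'c: "c' \<le> c" using assms(2) by (auto simp: c'_def)
  define k where "k = card VT"
  have sgT: "simple_graph VT ET" and neT: "VT \<noteq> {}" using tree by (auto simp: is_tree_def)
  have finT: "finite VT" using sgT by (simp add: simple_graph_def)
  have k1: "1 \<le> k" using neT finT by (simp add: k_def Suc_le_eq card_gt_0_iff)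
  define dm where "dm = (c'/2)^(2*k)"
  have dm0: "0 < dm" using c'0 by (simp add: dm_def)
  have Mf1: "1 \<le> Mf c' k" by (rule Mf_ge1'[OF c'0])
  have b0: "0 \<le> beta c' k" by (rule beta_ge0[OF c'0])
  define K where "K = (4/c' + 1 + real k * Mf c' k) / dm + beta c' k + 1"
  have Q0: "0 < 4/c' + 1 + real k * Mf c' k" using c'0 Mf1 by (simp add: add_pos_nonneg)
  have dmK: "dm * K \<ge> 4/c' + 1 + real k * Mf c' k"
  proof -
    have "dm * K = (4/c' + 1 + real k * Mf c' k) + dm * (beta c' k + 1)"
      using dm0 by (simp add: K_def field_simps)
    moreover have "0 \<le> dm * (beta c' k + 1)" using dm0 b0 by simp
    ultimately show ?thesis by linarith
  qed
  have Kb: "beta c' k < K"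
  proof -
    have "0 \<le> (4/c' + 1 + real k * Mf c' k) / dm" using Q0 dm0 by simp
    then show ?thesis by (simp add: K_def)
  qed
  have K0: "0 < K" using Kb b0 by linarith
  define C where "C = 2 * K + 2"
  show ?thesis
  proof (intro exI[of _ C] conjI allI impI)
    show "1 < C" using K0 by (simp add: C_def)
  next
    fix V :: "nat set" and E :: "nat \<Rightarrow> nat \<Rightarrow> bool" and t :: real and EG :: "nat \<Rightarrow> nat \<Rightarrow> bool"
    assume sgE: "simple_graph V E" and Vne: "V \<noteq> {}" and t0: "t > 0" and spar: "sparse c t V E"
      and sgG: "simple_graph V EG" and sub: "\<forall>u v. EG u v \<longrightarrow> E u v"
      and edges: "real (num_edges V EG) \<ge> C * t * real (card V)"
    have finV: "finite V" using sgE by (simp add: simple_graph_def)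
    have n0: "0 < real (card V)" using finV Vne by (simp add: card_gt_0_iff)
    have Eok: "\<And>u v. E u v \<Longrightarrow> u \<in> V \<and> v \<in> V \<and> E v u" using sgE by (simp add: simple_graph_def)
    have Eirr: "\<And>u. \<not> E u u" using sgE by (auto simp: simple_graph_def)
    have EGsym: "\<And>u v. EG u v \<Longrightarrow> EG v u" using sgG by (simp add: simple_graph_def)
    have Ctn: "0 < C * t * real (card V)" using K0 t0 n0 by (simp add: C_def)
    have t1: "1 < t"
    proof (rule ccontr)
      assume "\<not> 1 < t"
      then have tl: "t \<le> 1" by simp
      have noe: "\<not> EG u v" for u v
      proof
        assume "EG u v"
        then have e: "E u v" using sub by blast
        then have uv: "u \<in> V" "v \<in> V" using Eok by auto
        have "real (e_pairs E {u} {v}) \<le> (1 - c) * real (card {u}) * real (card {v})"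
        proof -
          have "{u} \<subseteq> V" "{v} \<subseteq> V" "t \<le> real (card {u})" "t \<le> real (card {v})" using uv tl by auto
          then show ?thesis using spar unfolding sparse_def by blast
        qed
        moreover have "{(a, b). a \<in> {u} \<and> b \<in> {v} \<and> E a b} = {(u, v)}" using e by auto
        ultimately have "1 \<le> 1 - c" by (simp add: e_pairs_def)
        then show False using assms(2) by simp
      qed
      have "num_edges V EG = 0" unfolding num_edges_def using noe by simp
      then show False using edges Ctn by simp
    qed
    have sp': "sparse c' t V E"
      unfolding sparse_def
    proof (intro allI impI)
      fix A B assume AB: "A \<subseteq> V" "B \<subseteq> V" "t \<le> real (card A)" "t \<le> real (card B)"
      then have "real (e_pairs E A B) \<le> (1 - c) * real (card A) * real (card B)"
        using spar unfolding sparse_def by blast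
      also have "\<dots> \<le> (1 - c') * real (card A) * real (card B)"
        using c'c by (intro mult_right_mono) auto
      finally show "real (e_pairs E A B) \<le> (1 - c') * real (card A) * real (card B)" .
    qed
    define D where "D = K * t"
    have "D * real (card V) < real (num_edges V EG)"
    proof -
      have p: "0 < (K + 2) * t * real (card V)" using K0 t0 n0 by simp
      have "C * t * real (card V) = D * real (card V) + (K + 2) * t * real (card V)"
        by (simp add: C_def D_def algebra_simps)
      then have "D * real (card V) < C * t * real (card V)" using p by linarith
      then show ?thesis using edges by linarith
    qed
    from mindeg[OF finV EGsym this] obtain W where
      WV: "W \<subseteq> V" and Wne: "W \<noteq> {}" and degW: "\<forall>w\<in>W. D \<le> real (card {y \<in> W. EG w y})" by blast
    interpret ctx V E EG W c' t D
    proof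
      show "finite V" by (rule finV)
      show "\<And>u v. E u v \<Longrightarrow> u \<in> V \<and> v \<in> V \<and> E v u" by (rule Eok)
      show "sparse c' t V E" by (rule sp')
      show "0 < c'" by (rule c'0)
      show "c' \<le> 1/2" by (rule c'1)
      show "W \<subseteq> V" by (rule WV)
      show "\<And>u v. EG u v \<Longrightarrow> E u v" using sub by blast
      show "\<And>u v. EG u v \<Longrightarrow> EG v u" by (rule EGsym)
      show "\<And>w. w \<in> W \<Longrightarrow> D \<le> real (card (nbh W EG w))" using degW by (simp add: nbh_def)
      show "0 < t" by (rule t0)
      show "\<And>u. \<not> E u u" by (rule Eirr)
    qed
    have Dnn: "0 \<le> D" using K0 t0 by (simp add: D_def)
    have dmD: "dm * D \<ge> (4/c' + 1 + real k * Mf c' k) * t"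
      using dmK t0 by (simp add: D_def mult.assoc[symmetric] mult_right_mono)
    have dm_t: "t \<le> dm * D"
    proof -
      have "t \<le> (4/c' + 1 + real k * Mf c' k) * t"
        using t0 c'0 Mf1 by (simp add: algebra_simps add_nonneg_nonneg)
      then show ?thesis using dmD by linarith
    qed
    have dm_c: "4 / c' \<le> dm * D"
    proof -
      have "4 / c' * 1 \<le> 4 / c' * t" using t1 c'0 by (intro mult_left_mono) auto
      then have "4 / c' \<le> 4 / c' * t" by simp
      also have "\<dots> \<le> (4/c' + 1 + real k * Mf c' k) * t"
        using t0 Mf1 by (intro mult_right_mono) auto
      finally show ?thesis using dmD by linarith
    qed
    have dm_k: "real k * Mf c' k * t < dm * D"
    proof -
      have "real k * Mf c' k * t < (4/c' + 1 + real k * Mf c' k) * t"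
      proof (intro mult_strict_right_mono)
        have "0 < 4 / c'" using c'0 by simp
        then show "real k * Mf c' k < 4/c' + 1 + real k * Mf c' k" by linarith
      qed (use t0 in simp)
      then show ?thesis using dmD by linarith
    qed
    have pw: "dm \<le> (c'/2)^h" if "h \<le> 2 * k" for h
      unfolding dm_def by (rule power_decreasing[OF that]) (use c'0 c'1 in auto)
    have cond: "t \<le> (c'/2)^h' * D \<and> 4 / c' \<le> (c'/2)^h' * D" if "h' < k" for h'
    proof -
      have "dm * D \<le> (c'/2)^h' * D" using pw[of h'] that Dnn by (intro mult_right_mono) auto
      then show ?thesis using dm_t dm_c by linarith
    qed
    have big: "beta c' k * t < D" using Kb t0 by (simp add: D_def)
    from root_exists[OF cond big Wne] obtain r where
      rW: "r \<in> W" and rg: "good E EG W k ((c'/2)^k) {r} r" by blast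
    from tree_order[OF tree] obtain xs par where
      xl: "length xs = k" and xd: "distinct xs" and xset: "set xs = VT"
      and xord: "\<forall>j. 0 < j \<longrightarrow> j < k \<longrightarrow> par j < j \<and> ET (xs ! par j) (xs ! j)"
      and xun: "\<forall>i j. i < j \<longrightarrow> j < k \<longrightarrow> ET (xs ! i) (xs ! j) \<longrightarrow> i = par j"
      unfolding k_def by blast
    have dmm: "dm \<le> (c'/2)^k * (c'/2)^m" if "m < k" for m
      using pw[of "k + m"] that by (simp add: power_add)
    from embed[of k par r "(c'/2)^k" dm, OF _ rW rg dmm dm_t dm_c dm_k less_imp_le[OF dm0] k1 order.refl]
      xord
    obtain us where ul: "length us = k" and ud: "distinct us" and uW: "set us \<subseteq> W"
      and uedg: "\<forall>j. 0 < j \<longrightarrow> j < k \<longrightarrow> EG (us ! par j) (us ! j)"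
      and uind: "\<forall>i j. i < j \<longrightarrow> j < k \<longrightarrow> E (us ! i) (us ! j) \<longrightarrow> i = par j"
      by blast
    define f where "f x = the (map_of (zip xs us) x)" for x
    have fx: "f (xs ! i) = us ! i" if "i < k" for i
      using map_of_zip_nth[of xs us i] xl ul xd that by (simp add: f_def)
    have symT: "ET x y \<Longrightarrow> ET y x" for x y using sgT by (simp add: simple_graph_def)
    have irrT: "\<not> ET x x" for x using sgT by (auto simp: simple_graph_def)
    have ex: "\<exists>i<k. x = xs ! i" if "x \<in> VT" for x using that xset xl by (metis in_set_conv_nth)
    show "\<exists>f. induced_copy VT ET V EG E f"
    proof (intro exI[of _ f])
      show "induced_copy VT ET V EG E f"
        unfolding induced_copy_def
      proof (intro conjI ballI impI)
        show "inj_on f VT"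
        proof (rule inj_onI)
          fix x y assume "x \<in> VT" "y \<in> VT" "f x = f y"
          then obtain i j where "i < k" "j < k" "x = xs ! i" "y = xs ! j" "us ! i = us ! j"
            using ex fx by metis
          then show "x = y" using ud ul by (simp add: nth_eq_iff_index_eq)
        qed
        show "f ` VT \<subseteq> V"
        proof
          fix z assume "z \<in> f ` VT"
          then obtain i where "i < k" "z = us ! i" using ex fx by blast
          then show "z \<in> V" using uW ul WV by (auto simp: set_conv_nth)
        qed
      next
        fix x y assume x: "x \<in> VT" and y: "y \<in> VT" and e: "ET x y"
        obtain i where i: "i < k" "x = xs ! i" using ex[OF x] by blast
        obtain j where j: "j < k" "y = xs ! j" using ex[OF y] by blast
        have "i \<noteq> j" using e irrT i j by blast
        then consider "i < j" | "j < i" by linarith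
        then show "EG (f x) (f y)"
        proof cases
          case 1
          then have "i = par j" using xun e i j by blast
          then have "EG (us ! i) (us ! j)" using uedg 1 j by simp
          then show ?thesis using fx i j by simp
        next
          case 2
          then have "j = par i" using xun symT[OF e] i j by blast
          then have "EG (us ! j) (us ! i)" using uedg 2 i by simp
          then show ?thesis using fx i j EGsym by simp
        qed
      next
        fix x y assume x: "x \<in> VT" and y: "y \<in> VT" and e: "E (f x) (f y)"
        obtain i where i: "i < k" "x = xs ! i" using ex[OF x] by blast
        obtain j where j: "j < k" "y = xs ! j" using ex[OF y] by blast
        have e': "E (us ! i) (us ! j)" using e fx i j by simp
        have "i \<noteq> j" using e' Eirr by blast
        then consider "i < j" | "j < i" by linarith
        then show "ET x y"
        proof cases
          case 1
          then have "i = par j" using uind e' j by blast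
          then show ?thesis using xord 1 i j by auto
        next
          case 2
          then have "j = par i" using uind Eok[OF e'] i by blast
          then have "ET (xs ! j) (xs ! i)" using xord 2 i by auto
          then show ?thesis using symT i j by simp
        qed
      qed
    qed
  qed
qed

end
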